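(* For a ring $R$ with identity, the following are equivalent: (i) $R$ is left semi-hereditary (equivalently, $R\text{-Mod}$ is $1$-hereditary); (ii) for every matrix $A\in\mathbf{M}_{k\times m}(R)$ there exists a matrix $B\in\mathbf{M}_{t\times k}(R)$ (for some $t\ge1$) such that (a) for every $X\in\mathbf{M}_{1\times k}(R)$, $XA=0$ if and only if $X=YB$ for some $Y\in\mathbf{M}_{1\times t}(R)$, and (b) there exists $C\in\mathbf{M}_{k\times k}(R)$ with $BC=0$ and $CA=A$.
   Context: $R$ is left semi-hereditary if every finitely generated left ideal (equivalently, every finitely generated submodule of a finitely generated projective left module) is projective; equivalently every finitely presented left $R$-module has projective dimension $\le1$. *)

theory Defs
  imports "Jordan_Normal_Form.Matrix"
begin

text \<open>Rings with identity (not necessarily commutative) are rendered by the type class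
ring_1; the ring R is the whole type 'a.  Left modules are left modules over this ring.\<close>

definition left_ideal :: "'a::ring_1 set \<Rightarrow> bool" where
  "left_ideal I \<longleftrightarrow> 0 \<in> I \<and> (\<forall>x\<in>I. \<forall>y\<in>I. x + y \<in> I) \<and> (\<forall>r x. x \<in> I \<longrightarrow> r * x \<in> I)"

definition fg_left_ideal :: "'a::ring_1 set \<Rightarrow> bool" where
  "fg_left_ideal I \<longleftrightarrow> (\<exists>G. finite G \<and> I = {(\<Sum>g\<in>G. c g * g) | c. True})"

definition free_mod :: "'b set \<Rightarrow> ('b \<Rightarrow> 'a::ring_1) set" where
  "free_mod J = {f. finite {j. f j \<noteq> 0} \<and> (\<forall>j. j \<notin> J \<longrightarrow> f j = 0)}"

definition lin_into_free :: "'a::ring_1 set \<Rightarrow> 'b set \<Rightarrow> ('a \<Rightarrow> 'b \<Rightarrow> 'a) \<Rightarrow> bool" where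
  "lin_into_free I J s \<longleftrightarrow> (\<forall>x\<in>I. s x \<in> free_mod J) \<and>
     (\<forall>x\<in>I. \<forall>y\<in>I. s (x + y) = (\<lambda>j. s x j + s y j)) \<and>
     (\<forall>r. \<forall>x\<in>I. s (r * x) = (\<lambda>j. r * s x j))"

definition lin_from_free :: "'b set \<Rightarrow> 'a::ring_1 set \<Rightarrow> (('b \<Rightarrow> 'a) \<Rightarrow> 'a) \<Rightarrow> bool" where
  "lin_from_free J I p \<longleftrightarrow> (\<forall>f\<in>free_mod J. p f \<in> I) \<and>
     (\<forall>f\<in>free_mod J. \<forall>g\<in>free_mod J. p (\<lambda>j. f j + g j) = p f + p g) \<and>
     (\<forall>r. \<forall>f\<in>free_mod J. p (\<lambda>j. r * f j) = r * p f)"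

text \<open>A left ideal I is projective as a left R-module iff it is (isomorphic to) a direct
summand of a free left R-module, i.e. there are linear s : I \<rightarrow> R^(J), p : R^(J) \<rightarrow> I with
p \<circ> s = id.  Index sets J range over subsets of 'a, which suffices since I is a quotient
of R^(I).\<close>
definition projective_left_ideal :: "'a::ring_1 set \<Rightarrow> bool" where
  "projective_left_ideal I \<longleftrightarrow> (\<exists>(J::'a set) s p. lin_into_free I J s \<and> lin_from_free J I p \<and>
      (\<forall>x\<in>I. p (s x) = x))"

definition left_semi_hereditary :: "'a::ring_1 itself \<Rightarrow> bool" where
  "left_semi_hereditary _ \<longleftrightarrow>
     (\<forall>I::'a set. left_ideal I \<and> fg_left_ideal I \<longrightarrow> projective_left_ideal I)"

end

theory Submission
  imports Defs
begin


lemma free_mod_zero: "(\<lambda>j. 0) \<in> free_mod J"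
  unfolding free_mod_def by auto

lemma free_mod_add: "f \<in> free_mod J \<Longrightarrow> g \<in> free_mod J \<Longrightarrow> (\<lambda>j. f j + g j) \<in> free_mod J"
proof -
  assume f: "f \<in> free_mod J" and g: "g \<in> free_mod J"
  have "{j. f j + g j \<noteq> 0} \<subseteq> {j. f j \<noteq> 0} \<union> {j. g j \<noteq> 0}" by auto
  then show ?thesis using f g unfolding free_mod_def by (auto intro: finite_subset)
qed

lemma free_mod_smult: "f \<in> free_mod J \<Longrightarrow> (\<lambda>j. r * f j) \<in> free_mod J"
  unfolding free_mod_def
  by (auto intro: finite_subset[of _ "{j. f j \<noteq> 0}"])

lemma free_mod_sum:
  assumes "finite F" "\<And>j. j \<in> F \<Longrightarrow> f j \<in> free_mod J"
  shows "(\<lambda>t. \<Sum>j\<in>F. f j t) \<in> free_mod J"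
  using assms
proof (induction F rule: finite_induct)
  case empty then show ?case using free_mod_zero by simp
next
  case (insert x F)
  then show ?case using free_mod_add[of "f x" J "\<lambda>t. \<Sum>j\<in>F. f j t"] by simp
qed

lemma lff_add: "lin_from_free J I p \<Longrightarrow> f \<in> free_mod J \<Longrightarrow> g \<in> free_mod J \<Longrightarrow> p (\<lambda>j. f j + g j) = p f + p g"
  unfolding lin_from_free_def by blast
lemma lff_smult: "lin_from_free J I p \<Longrightarrow> f \<in> free_mod J \<Longrightarrow> p (\<lambda>j. r * f j) = r * p f"
  unfolding lin_from_free_def by blast
lemma lff_in: "lin_from_free J I p \<Longrightarrow> f \<in> free_mod J \<Longrightarrow> p f \<in> I"
  unfolding lin_from_free_def by blast
lemma lif_add: "lin_into_free I J s \<Longrightarrow> x \<in> I \<Longrightarrow> y \<in> I \<Longrightarrow> s (x + y) = (\<lambda>j. s x j + s y j)"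
  unfolding lin_into_free_def by blast
lemma lif_smult: "lin_into_free I J s \<Longrightarrow> x \<in> I \<Longrightarrow> s (r * x) = (\<lambda>j. r * s x j)"
  unfolding lin_into_free_def by blast
lemma lif_in: "lin_into_free I J s \<Longrightarrow> x \<in> I \<Longrightarrow> s x \<in> free_mod J"
  unfolding lin_into_free_def by blast

lemma p_sum:
  assumes p: "lin_from_free J I p" and F: "finite F" "\<And>j. j \<in> F \<Longrightarrow> f j \<in> free_mod J"
  shows "p (\<lambda>t. \<Sum>j\<in>F. r j * f j t) = (\<Sum>j\<in>F. r j * p (f j))"
  using F
proof (induction F rule: finite_induct)
  case empty
  have h: "\<forall>r. \<forall>f\<in>free_mod J. p (\<lambda>j. r * f j) = r * p f"
    using p unfolding lin_from_free_def by blast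
  have "p (\<lambda>j. 0 * (\<lambda>j. 0) j) = 0 * p (\<lambda>j. 0)"
    by (rule h[THEN spec, THEN bspec, OF free_mod_zero])
  then show ?case by simp
next
  case (insert x F)
  have a: "(\<lambda>t. r x * f x t) \<in> free_mod J" using insert free_mod_smult by auto
  have b: "(\<lambda>t. \<Sum>j\<in>F. r j * f j t) \<in> free_mod J"
    using insert by (intro free_mod_sum free_mod_smult) auto
  have "p (\<lambda>t. \<Sum>j\<in>insert x F. r j * f j t) = p (\<lambda>t. (\<lambda>t. r x * f x t) t + (\<lambda>t. \<Sum>j\<in>F. r j * f j t) t)"
    using insert by simp
  also have "\<dots> = p (\<lambda>t. r x * f x t) + p (\<lambda>t. \<Sum>j\<in>F. r j * f j t)"
    using lff_add[OF p a b] by simp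
  also have "p (\<lambda>t. r x * f x t) = r x * p (f x)"
    using lff_smult[OF p, of "f x" "r x"] insert by simp
  finally show ?case using insert by simp
qed

lemma ideal_sum:
  assumes "left_ideal I" "finite A" "\<And>i. i \<in> A \<Longrightarrow> b i \<in> I"
  shows "(\<Sum>i\<in>A. x i * b i) \<in> I"
  using assms(2,3)
proof (induction A rule: finite_induct)
  case empty then show ?case using assms(1) unfolding left_ideal_def by simp
next
  case (insert a A)
  then show ?case using assms(1) unfolding left_ideal_def by auto
qed

lemma s_zero:
  assumes "lin_into_free I J s" "left_ideal I"
  shows "s 0 = (\<lambda>j. 0)"
proof -
  have "0 \<in> I" using assms(2) unfolding left_ideal_def by auto
  then have "s (0 * 0) = (\<lambda>j. 0 * s 0 j)" using assms(1) unfolding lin_into_free_def by blast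
  then show ?thesis by simp
qed

lemma s_sum:
  assumes s: "lin_into_free I J s" and I: "left_ideal I"
    and A: "finite A" "\<And>i. i \<in> A \<Longrightarrow> b i \<in> I"
  shows "s (\<Sum>i\<in>A. x i * b i) = (\<lambda>j. \<Sum>i\<in>A. x i * s (b i) j)"
  using A
proof (induction A rule: finite_induct)
  case empty then show ?case using s_zero[OF s I] by simp
next
  case (insert a A)
  have m: "x a * b a \<in> I" using I insert unfolding left_ideal_def by auto
  have r: "(\<Sum>i\<in>A. x i * b i) \<in> I" using ideal_sum[OF I] insert by auto
  have "s (\<Sum>i\<in>insert a A. x i * b i) = s (x a * b a + (\<Sum>i\<in>A. x i * b i))"
    using insert by simp
  also have "\<dots> = (\<lambda>j. s (x a * b a) j + s (\<Sum>i\<in>A. x i * b i) j)"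
    using s m r unfolding lin_into_free_def by blast
  also have "s (x a * b a) = (\<lambda>j. x a * s (b a) j)"
    using s insert unfolding lin_into_free_def by blast
  finally show ?case using insert by simp
qed

lemma fg_indexed:
  fixes a :: "nat \<Rightarrow> 'a::ring_1"
  shows "fg_left_ideal {(\<Sum>i<k. x i * a i) | x. True}"
  unfolding fg_left_ideal_def
proof (intro exI[of _ "a ` {..<k}"] conjI)
  let ?G = "a ` {..<k}"
  show "finite ?G" by simp
  show "{(\<Sum>i<k. x i * a i) | x. True} = {(\<Sum>g\<in>?G. c g * g) | c. True}"
  proof (intro equalityI subsetI)
    fix z assume "z \<in> {(\<Sum>i<k. x i * a i) | x. True}"
    then obtain x where z: "z = (\<Sum>i<k. x i * a i)" by auto
    define c where "c g = (\<Sum>i\<in>{i\<in>{..<k}. a i = g}. x i)" for g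
    have "(\<Sum>i<k. x i * a i) = (\<Sum>g\<in>?G. \<Sum>i\<in>{i\<in>{..<k}. a i = g}. x i * a i)"
      by (rule sum.image_gen) simp
    also have "\<dots> = (\<Sum>g\<in>?G. c g * g)"
      unfolding c_def sum_distrib_right by (intro sum.cong refl) auto
    finally show "z \<in> {(\<Sum>g\<in>?G. c g * g) | c. True}" using z by auto
  next
    fix z assume "z \<in> {(\<Sum>g\<in>?G. c g * g) | c. True}"
    then obtain c where z: "z = (\<Sum>g\<in>?G. c g * g)" by auto
    define h where "h = inv_into {..<k} a"
    have hinj: "inj_on h ?G" unfolding h_def by (rule inj_on_inv_into) simp
    have hG: "h ` ?G \<subseteq> {..<k}" unfolding h_def by (auto intro!: inv_into_into[of _ _ "{..<k}", simplified])
    have ah: "a (h g) = g" if "g \<in> ?G" for g unfolding h_def using that by (simp add: f_inv_into_f)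
    define x where "x i = (if i \<in> h ` ?G then c (a i) else 0)" for i
    have "(\<Sum>i<k. x i * a i) = (\<Sum>i\<in>h ` ?G. x i * a i)"
      using hG by (intro sum.mono_neutral_right) (auto simp: x_def)
    also have "\<dots> = (\<Sum>g\<in>?G. x (h g) * a (h g))"
      by (rule sum.reindex[OF hinj, unfolded comp_def])
    also have "\<dots> = (\<Sum>g\<in>?G. c g * g)"
      by (intro sum.cong refl) (auto simp: x_def ah)
    finally have "z = (\<Sum>i<k. x i * a i)" using z by simp
    then show "z \<in> {(\<Sum>i<k. x i * a i) | x. True}" by blast
  qed
qed

lemma base_elem:
  fixes a :: "nat \<Rightarrow> 'a::ring_1"
  assumes lsh: "left_semi_hereditary TYPE('a)"
  shows "\<exists>c::nat\<Rightarrow>nat\<Rightarrow>'a. (\<forall>i<k. (\<Sum>l<k. c i l * a l) = a i) \<and>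
     (\<forall>x. (\<Sum>i<k. x i * a i) = 0 \<longrightarrow> (\<forall>l<k. (\<Sum>i<k. x i * c i l) = 0))"
proof -
  define I where "I = {(\<Sum>i<k. x i * a i) | x. True}"
  have LI: "left_ideal I" unfolding left_ideal_def I_def
  proof (intro conjI ballI allI impI)
    show "0 \<in> {(\<Sum>i<k. x i * a i) | x. True}" by (intro CollectI exI[of _ "\<lambda>i. 0"]) simp
  next
    fix u v assume "u \<in> {(\<Sum>i<k. x i * a i) | x. True}" "v \<in> {(\<Sum>i<k. x i * a i) | x. True}"
    then obtain x y where "u = (\<Sum>i<k. x i * a i)" "v = (\<Sum>i<k. y i * a i)" by auto
    then have "u + v = (\<Sum>i<k. (x i + y i) * a i)" by (simp add: sum.distrib distrib_right)
    then show "u + v \<in> {(\<Sum>i<k. x i * a i) | x. True}" by (intro CollectI exI[of _ "\<lambda>i. x i + y i"]) simp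
  next
    fix r u assume "u \<in> {(\<Sum>i<k. x i * a i) | x. True}"
    then obtain x where "u = (\<Sum>i<k. x i * a i)" by auto
    then have "r * u = (\<Sum>i<k. (r * x i) * a i)" by (simp add: sum_distrib_left mult.assoc)
    then show "r * u \<in> {(\<Sum>i<k. x i * a i) | x. True}" by (intro CollectI exI[of _ "\<lambda>i. r * x i"]) simp
  qed
  have FG: "fg_left_ideal I" unfolding I_def by (rule fg_indexed)
  have "projective_left_ideal I"
    using lsh[unfolded left_semi_hereditary_def, rule_format, OF conjI[OF LI FG]] .
  then obtain J :: "'a set" and s p where sp: "lin_into_free I J s \<and> lin_from_free J I p \<and> (\<forall>x\<in>I. p (s x) = x)"
    unfolding projective_left_ideal_def by blast
  have s: "lin_into_free I J s" and p: "lin_from_free J I p" and ps: "\<And>x. x \<in> I \<Longrightarrow> p (s x) = x"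
    using sp by auto
  define e where "e j = (\<lambda>t. if t = j then (1::'a) else 0)" for j :: 'a
  have eJ: "e j \<in> free_mod J" if "j \<in> J" for j
    using that unfolding e_def free_mod_def by auto
  have "\<exists>y. p (e j) = (\<Sum>i<k. y i * a i)" if "j \<in> J" for j
    using lff_in[OF p eJ[OF that]] unfolding I_def by auto
  then obtain y where y: "\<And>j. j \<in> J \<Longrightarrow> p (e j) = (\<Sum>i<k. y j i * a i)" by metis
  have aI: "a i \<in> I" if "i < k" for i
  proof -
    have "(\<Sum>l<k. (if l = i then 1 else 0) * a l) = (\<Sum>l<k. if l = i then a l else 0)"
      by (intro sum.cong) auto
    then have "a i = (\<Sum>l<k. (if l = i then 1 else 0) * a l)" using that by simp
    then show ?thesis unfolding I_def by (intro CollectI exI[of _ "\<lambda>l. if l = i then 1 else 0"]) simp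
  qed
  define F where "F = (\<Union>i<k. {j. s (a i) j \<noteq> 0})"
  have finF: "finite F" unfolding F_def
    using lif_in[OF s aI] unfolding free_mod_def by auto
  have FJ: "F \<subseteq> J" unfolding F_def
    using lif_in[OF s aI] unfolding free_mod_def by auto
  define c where "c i l = (\<Sum>j\<in>F. s (a i) j * y j l)" for i l
  have "(\<Sum>l<k. c i l * a l) = a i" if i: "i < k" for i
  proof -
    have "(\<Sum>l<k. c i l * a l) = (\<Sum>j\<in>F. s (a i) j * (\<Sum>l<k. y j l * a l))"
      unfolding c_def sum_distrib_right sum_distrib_left
      by (subst sum.swap) (simp add: mult.assoc)
    also have "\<dots> = (\<Sum>j\<in>F. s (a i) j * p (e j))"
      using y FJ by (intro sum.cong refl) auto
    also have "\<dots> = p (\<lambda>t. \<Sum>j\<in>F. s (a i) j * e j t)"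
      using eJ FJ finF by (intro p_sum[OF p, symmetric]) auto
    also have "(\<lambda>t. \<Sum>j\<in>F. s (a i) j * e j t) = s (a i)"
    proof
      fix t
      have "(\<Sum>j\<in>F. s (a i) j * e j t) = (\<Sum>j\<in>F. if t = j then s (a i) j else 0)"
        unfolding e_def by (intro sum.cong) auto
      also have "\<dots> = (if t \<in> F then s (a i) t else 0)"
        using finF by (simp add: sum.delta)
      also have "\<dots> = s (a i) t" using i unfolding F_def by auto
      finally show "(\<Sum>j\<in>F. s (a i) j * e j t) = s (a i) t" .
    qed
    also have "p (s (a i)) = a i" using ps aI i by auto
    finally show ?thesis .
  qed
  moreover have "(\<Sum>i<k. x i * c i l) = 0" if x: "(\<Sum>i<k. x i * a i) = 0" and l: "l < k" for x l
  proof -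
    have "(\<Sum>i<k. x i * c i l) = (\<Sum>j\<in>F. (\<Sum>i<k. x i * s (a i) j) * y j l)"
      unfolding c_def sum_distrib_right sum_distrib_left
      by (subst sum.swap) (simp add: mult.assoc)
    also have "\<dots> = (\<Sum>j\<in>F. s (\<Sum>i<k. x i * a i) j * y j l)"
      using s_sum[OF s LI, of "{..<k}" a x] aI by simp
    also have "\<dots> = 0" using x s_zero[OF s LI] by simp
    finally show ?thesis .
  qed
  ultimately show ?thesis by blast
qed



lemma E2P:
  fixes e :: "nat \<Rightarrow> 'a::ring_1"
  assumes G: "finite G" and bij: "bij_betw e {..<k} G"
    and c1: "\<And>i. i < k \<Longrightarrow> (\<Sum>l<k. c i l * e l) = e i"
    and c2: "\<And>x l. (\<Sum>i<k. x i * e i) = 0 \<Longrightarrow> l < k \<Longrightarrow> (\<Sum>i<k. x i * c i l) = 0"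
  shows "projective_left_ideal {(\<Sum>g\<in>G. cc g * g) | cc. True}"
proof -
  define I where "I = {(\<Sum>g\<in>G. cc g * g) | cc. True}"
  define h where "h = inv_into {..<k} e"
  have he: "h (e i) = i" if "i < k" for i
    using bij that unfolding h_def bij_betw_def by (simp add: inv_into_f_f)
  have eh: "e (h g) = g" "h g < k" if "g \<in> G" for g
    using bij that unfolding h_def bij_betw_def by (auto simp: f_inv_into_f inv_into_into)
  have reidx: "(\<Sum>g\<in>G. f g) = (\<Sum>i<k. f (e i))" for f :: "'a \<Rightarrow> 'a"
    using sum.reindex_bij_betw[OF bij, of f] by simp
  have rep: "\<exists>x'. x = (\<Sum>i<k. x' i * e i)" if "x \<in> I" for x
  proof -
    from that obtain cc where "x = (\<Sum>g\<in>G. cc g * g)" unfolding I_def by auto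
    then have "x = (\<Sum>i<k. cc (e i) * e i)" using reidx by simp
    then show ?thesis by (intro exI[of _ "\<lambda>i. cc (e i)"])
  qed
  define X where "X x = (SOME x'. x = (\<Sum>i<k. x' i * e i))" for x
  have X: "x = (\<Sum>i<k. X x i * e i)" if "x \<in> I" for x
    unfolding X_def using someI_ex[OF rep[OF that]] .
  have wd: "(\<Sum>i<k. x i * c i l) = (\<Sum>i<k. x' i * c i l)"
    if "(\<Sum>i<k. x i * e i) = (\<Sum>i<k. x' i * e i)" "l < k" for x x' l
  proof -
    have "(\<Sum>i<k. (x i - x' i) * e i) = 0" using that by (simp add: left_diff_distrib sum_subtractf)
    then have "(\<Sum>i<k. (x i - x' i) * c i l) = 0" by (rule c2[of "\<lambda>i. x i - x' i", OF _ that(2)])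
    then show ?thesis by (simp add: left_diff_distrib sum_subtractf)
  qed
  define s where "s x = (\<lambda>g. if g \<in> G then (\<Sum>i<k. X x i * c i (h g)) else 0)" for x
  define p where "p f = (\<Sum>g\<in>G. f g * g)" for f :: "'a \<Rightarrow> 'a"
  have "lin_into_free I G s" unfolding lin_into_free_def
  proof (intro conjI ballI allI)
    fix x assume "x \<in> I"
    have "{g. s x g \<noteq> 0} \<subseteq> G" unfolding s_def by auto
    then show "s x \<in> free_mod G" unfolding free_mod_def using G
      by (auto intro: finite_subset simp: s_def)
  next
    fix x y assume x: "x \<in> I" and y: "y \<in> I"
    have xy: "x + y \<in> I"
    proof -
      obtain c1 c2 where "x = (\<Sum>g\<in>G. c1 g * g)" "y = (\<Sum>g\<in>G. c2 g * g)"
        using x y unfolding I_def by auto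
      then have "x + y = (\<Sum>g\<in>G. (c1 g + c2 g) * g)" by (simp add: sum.distrib distrib_right)
      then show ?thesis unfolding I_def by (intro CollectI exI[of _ "\<lambda>g. c1 g + c2 g"]) simp
    qed
    show "s (x + y) = (\<lambda>j. s x j + s y j)"
    proof
      fix g
      show "s (x + y) g = s x g + s y g"
      proof (cases "g \<in> G")
        case True
        have "(\<Sum>i<k. X (x+y) i * e i) = (\<Sum>i<k. (X x i + X y i) * e i)"
          using X[OF xy] X[OF x] X[OF y] by (simp add: distrib_right sum.distrib)
        then have "(\<Sum>i<k. X (x+y) i * c i (h g)) = (\<Sum>i<k. (X x i + X y i) * c i (h g))"
          by (rule wd[OF _ eh(2)[OF True]])
        then show ?thesis using True unfolding s_def by (simp add: distrib_right sum.distrib)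
      qed (simp add: s_def)
    qed
  next
    fix r x assume x: "x \<in> I"
    have rx: "r * x \<in> I"
    proof -
      obtain c1 where "x = (\<Sum>g\<in>G. c1 g * g)"
        using x unfolding I_def by auto
      then have "r * x = (\<Sum>g\<in>G. (r * c1 g) * g)" by (simp add: sum_distrib_left mult.assoc)
      then show ?thesis unfolding I_def by (intro CollectI exI[of _ "\<lambda>g. r * c1 g"]) simp
    qed
    show "s (r * x) = (\<lambda>j. r * s x j)"
    proof
      fix g
      show "s (r * x) g = r * s x g"
      proof (cases "g \<in> G")
        case True
        have "(\<Sum>i<k. X (r*x) i * e i) = (\<Sum>i<k. (r * X x i) * e i)"
        proof -
          have "(\<Sum>i<k. (r * X x i) * e i) = r * (\<Sum>i<k. X x i * e i)"
            by (simp add: sum_distrib_left mult.assoc)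
          then show ?thesis using X[OF rx] X[OF x] by simp
        qed
        then have "(\<Sum>i<k. X (r*x) i * c i (h g)) = (\<Sum>i<k. (r * X x i) * c i (h g))"
          by (rule wd[OF _ eh(2)[OF True]])
        then show ?thesis using True unfolding s_def by (simp add: sum_distrib_left mult.assoc)
      qed (simp add: s_def)
    qed
  qed
  moreover have "lin_from_free G I p" unfolding lin_from_free_def
  proof (intro conjI ballI allI)
    fix f :: "'a \<Rightarrow> 'a" assume "f \<in> free_mod G"
    show "p f \<in> I" unfolding p_def I_def by blast
  next
    fix f g :: "'a \<Rightarrow> 'a"
    show "p (\<lambda>j. f j + g j) = p f + p g" unfolding p_def by (simp add: distrib_right sum.distrib)
  next
    fix r and f :: "'a \<Rightarrow> 'a"
    show "p (\<lambda>j. r * f j) = r * p f" unfolding p_def by (simp add: sum_distrib_left mult.assoc)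
  qed
  moreover have "p (s x) = x" if x: "x \<in> I" for x
  proof -
    have "p (s x) = (\<Sum>l<k. s x (e l) * e l)" unfolding p_def by (rule reidx)
    also have "\<dots> = (\<Sum>l<k. (\<Sum>i<k. X x i * c i l) * e l)"
      using bij he unfolding s_def bij_betw_def by (intro sum.cong refl) auto
    also have "\<dots> = (\<Sum>i<k. X x i * (\<Sum>l<k. c i l * e l))"
      unfolding sum_distrib_right sum_distrib_left by (subst sum.swap) (simp add: mult.assoc)
    also have "\<dots> = (\<Sum>i<k. X x i * e i)" using c1 by simp
    also have "\<dots> = x" using X[OF x] by simp
    finally show ?thesis .
  qed
  ultimately show ?thesis unfolding projective_left_ideal_def I_def[symmetric]
    by (intro exI[of _ G] exI[of _ s] exI[of _ p]) auto
qed


definition Good :: "nat \<Rightarrow> 'a::ring_1 mat list \<Rightarrow> bool" where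
 "Good k S \<longleftrightarrow> (\<exists>C\<in>carrier_mat k k. (\<forall>w\<in>set S. C * w = w) \<and>
    (\<forall>X\<in>carrier_mat 1 k. (\<forall>w\<in>set S. X * w = 0\<^sub>m 1 1) \<longrightarrow> X * C = 0\<^sub>m 1 k))"

lemma Good_nil: "Good k []"
  unfolding Good_def by (intro bexI[of _ "0\<^sub>m k k"]) auto

lemma Good_cons:
  fixes w :: "'a::ring_1 mat"
  assumes w: "w \<in> carrier_mat k 1" and T: "\<forall>u\<in>set T. u \<in> carrier_mat k 1"
    and C1: "C1 \<in> carrier_mat k k" "C1 * w = w"
       "\<forall>X\<in>carrier_mat 1 k. X * w = 0\<^sub>m 1 1 \<longrightarrow> X * C1 = 0\<^sub>m 1 k"
    and G2: "Good k (map (\<lambda>u. (1\<^sub>m k - C1) * u) T)"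
  shows "Good k (w # T)"
proof -
  from G2 obtain C2 where C2: "C2 \<in> carrier_mat k k"
    "\<And>u. u\<in>set T \<Longrightarrow> C2 * ((1\<^sub>m k - C1) * u) = (1\<^sub>m k - C1) * u"
    "\<And>X. X\<in>carrier_mat 1 k \<Longrightarrow> (\<forall>u\<in>set T. X * ((1\<^sub>m k - C1) * u) = 0\<^sub>m 1 1) \<Longrightarrow> X * C2 = 0\<^sub>m 1 k"
    unfolding Good_def by auto
  define C where "C = C1 + C2 * (1\<^sub>m k - C1)"
  have D: "1\<^sub>m k - C1 \<in> carrier_mat k k" using C1 by auto
  have Cc: "C \<in> carrier_mat k k" unfolding C_def using C1 C2 by auto
  have DD: "\<And>u. u \<in> carrier_mat k 1 \<Longrightarrow> (1\<^sub>m k - C1) * u = u - C1 * u"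
    using C1 by (subst minus_mult_distrib_mat) auto
  have Cu: "C * u = C1 * u + C2 * ((1\<^sub>m k - C1) * u)" if "u \<in> carrier_mat k 1" for u
    unfolding C_def using that C1 C2 D
    by (subst add_mult_distrib_mat[of _ k k]) auto
  have "C * w = w"
  proof -
    have "(1\<^sub>m k - C1) * w = 0\<^sub>m k 1" using DD[OF w] C1 w by simp
    then show ?thesis using Cu[OF w] C1 w C2 by simp
  qed
  moreover have "\<forall>u\<in>set T. C * u = u"
  proof
    fix u assume u: "u \<in> set T"
    have uc: "u \<in> carrier_mat k 1" using T u by auto
    have "C * u = C1 * u + (u - C1 * u)" using Cu[OF uc] C2(2)[OF u] DD[OF uc] by simp
    also have "\<dots> = u" using uc C1 by (intro eq_matI) auto
    finally show "C * u = u" .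
  qed
  moreover have "\<forall>X\<in>carrier_mat 1 k. (\<forall>v\<in>set (w#T). X * v = 0\<^sub>m 1 1) \<longrightarrow> X * C = 0\<^sub>m 1 k"
  proof (intro ballI impI)
    fix X assume X: "X \<in> carrier_mat 1 k"
    and Xz: "\<forall>v\<in>set (w#T). X * v = 0\<^sub>m 1 1"
    have X1: "X * C1 = 0\<^sub>m 1 k" using C1(3) X Xz by auto
    have "X * ((1\<^sub>m k - C1) * u) = 0\<^sub>m 1 1" if u: "u \<in> set T" for u
    proof -
      have uc: "u \<in> carrier_mat k 1" using T u by auto
      have "X * ((1\<^sub>m k - C1) * u) = (X * (1\<^sub>m k - C1)) * u" using X D uc by simp
      also have "X * (1\<^sub>m k - C1) = X - X * C1" using X C1
        by (subst mult_minus_distrib_mat[of _ 1 k]) auto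
      also have "\<dots> = X" using X1 X by (intro eq_matI) auto
      finally show ?thesis using Xz u by simp
    qed
    then have X2: "X * C2 = 0\<^sub>m 1 k" using C2(3) X by auto
    have "X * C = X * C1 + X * (C2 * (1\<^sub>m k - C1))" unfolding C_def using X C1 C2 D
      by (subst mult_add_distrib_mat[of _ 1 k]) auto
    also have "X * (C2 * (1\<^sub>m k - C1)) = (X * C2) * (1\<^sub>m k - C1)" using X C2 D by simp
    finally have "X * C = 0\<^sub>m 1 k + 0\<^sub>m 1 k * (1\<^sub>m k - C1)" using X1 X2 by simp
    also have "0\<^sub>m 1 k * (1\<^sub>m k - C1) = 0\<^sub>m 1 k" by (rule left_mult_zero_mat[OF D])
    finally show "X * C = 0\<^sub>m 1 k" by simp
  qed
  ultimately have "(\<forall>v\<in>set (w#T). C * v = v) \<and> (\<forall>X\<in>carrier_mat 1 k. (\<forall>v\<in>set (w#T). X * v = 0\<^sub>m 1 1) \<longrightarrow> X * C = 0\<^sub>m 1 k)"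
    by simp
  then show ?thesis unfolding Good_def using Cc by (intro bexI[of _ C]) auto
qed


lemma mult_col_entry:
  fixes X :: "'a::ring_1 mat"
  assumes "X \<in> carrier_mat 1 k" "w \<in> carrier_mat k 1"
  shows "(X * w) $$ (0,0) = (\<Sum>i<k. X $$ (0,i) * w $$ (i,0))"
  using assms by (simp add: scalar_prod_def atLeast0LessThan)

lemma zero11: "(M::'a::ring_1 mat) \<in> carrier_mat 1 1 \<Longrightarrow> M = 0\<^sub>m 1 1 \<longleftrightarrow> M $$ (0,0) = 0"
  by (auto intro!: eq_matI)

lemma Good_single:
  fixes w :: "'a::ring_1 mat"
  assumes lsh: "left_semi_hereditary TYPE('a)" and w: "w \<in> carrier_mat k 1"
  shows "\<exists>C\<in>carrier_mat k k. C * w = w \<and> (\<forall>X\<in>carrier_mat 1 k. X * w = 0\<^sub>m 1 1 \<longrightarrow> X * C = 0\<^sub>m 1 k)"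
proof -
  obtain c where c1: "\<And>i. i<k \<Longrightarrow> (\<Sum>l<k. c i l * w $$ (l,0)) = w $$ (i,0)"
    and c2: "\<And>x l. (\<Sum>i<k. x i * w $$ (i,0)) = 0 \<Longrightarrow> l < k \<Longrightarrow> (\<Sum>i<k. x i * c i l) = 0"
    using base_elem[OF lsh, of k "\<lambda>i. w $$ (i,0)"] by blast
  define C where "C = mat k k (\<lambda>(i,l). c i l)"
  have Cc: "C \<in> carrier_mat k k" unfolding C_def by simp
  have "C * w = w"
  proof (rule eq_matI)
    fix i j assume "i < dim_row w" "j < dim_col w"
    then have i: "i < k" and j: "j = 0" using w by auto
    show "(C * w) $$ (i, j) = w $$ (i, j)"
      using i j w c1[OF i] unfolding C_def by (simp add: scalar_prod_def atLeast0LessThan)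
  qed (use w Cc in auto)
  moreover have "X * C = 0\<^sub>m 1 k" if X: "X \<in> carrier_mat 1 k" and Xw: "X * w = 0\<^sub>m 1 1" for X
  proof (rule eq_matI)
    have "(X * w) $$ (0,0) = 0" using Xw by simp
    then have s0: "(\<Sum>i<k. X $$ (0,i) * w $$ (i,0)) = 0" using mult_col_entry[OF X w] by simp
    fix i j assume "i < dim_row (0\<^sub>m 1 k :: 'a mat)" "j < dim_col (0\<^sub>m 1 k :: 'a mat)"
    then have i: "i = 0" and j: "j < k" by auto
    show "(X * C) $$ (i, j) = 0\<^sub>m 1 k $$ (i, j)"
      using i j X c2[OF s0 j] unfolding C_def by (simp add: scalar_prod_def atLeast0LessThan)
  qed (use X Cc in auto)
  ultimately show ?thesis using Cc by blast
qed

lemma Good_all_n: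
  assumes lsh: "left_semi_hereditary TYPE('a::ring_1)"
  shows "\<forall>S::'a mat list. length S = n \<longrightarrow> (\<forall>w\<in>set S. w \<in> carrier_mat k 1) \<longrightarrow> Good k S"
proof (induction n)
  case 0 then show ?case using Good_nil by auto
next
  case (Suc n)
  show ?case
  proof (intro allI impI)
    fix S :: "'a mat list" assume len: "length S = Suc n" and car: "\<forall>w\<in>set S. w \<in> carrier_mat k 1"
    then obtain w T where S: "S = w # T" by (cases S) auto
    have w: "w \<in> carrier_mat k 1" and T: "\<forall>u\<in>set T. u \<in> carrier_mat k 1" using car S by auto
    obtain C1 where C1: "C1 \<in> carrier_mat k k" "C1 * w = w"
      "\<forall>X\<in>carrier_mat 1 k. X * w = 0\<^sub>m 1 1 \<longrightarrow> X * C1 = 0\<^sub>m 1 k"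
      using Good_single[OF lsh w] by blast
    have "Good k (map (\<lambda>u. (1\<^sub>m k - C1) * u) T)"
    proof -
      have "\<forall>u\<in>set (map (\<lambda>u. (1\<^sub>m k - C1) * u) T). u \<in> carrier_mat k 1"
        using T C1(1) by (auto intro!: mult_carrier_mat[of _ k k])
      moreover have "length (map (\<lambda>u. (1\<^sub>m k - C1) * u) T) = n" using len S by simp
      ultimately show ?thesis using Suc.IH by blast
    qed
    then show "Good k S" unfolding S by (rule Good_cons[OF w T C1])
  qed
qed

lemma Good_all:
  assumes "left_semi_hereditary TYPE('a::ring_1)" "\<forall>w\<in>set S. w \<in> carrier_mat k 1"
  shows "Good k (S::'a mat list)"
  using Good_all_n[OF assms(1), of "length S" k] assms(2) by auto



lemma col_entry:
  fixes M :: "'a::ring_1 mat"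
  assumes "M \<in> carrier_mat r k" "A \<in> carrier_mat k m" "j < m" "i < r"
  shows "(M * mat k 1 (\<lambda>(i,_). A $$ (i,j))) $$ (i,0) = (M * A) $$ (i,j)"
  using assms by (simp add: scalar_prod_def)

lemma dir1:
  fixes A :: "'a::ring_1 mat"
  assumes lsh: "left_semi_hereditary TYPE('a)" and k: "k \<ge> 1" and A: "A \<in> carrier_mat k m"
  shows "\<exists>t (B::'a mat). t \<ge> 1 \<and> B \<in> carrier_mat t k \<and>
         (\<forall>X \<in> carrier_mat 1 k. X * A = 0\<^sub>m 1 m \<longleftrightarrow> (\<exists>Y \<in> carrier_mat 1 t. X = Y * B)) \<and>
         (\<exists>C \<in> carrier_mat k k. B * C = 0\<^sub>m t k \<and> C * A = A)"
proof -
  define S where "S = map (\<lambda>j. mat k 1 (\<lambda>(i,_). A $$ (i,j))) [0..<m]"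
  have "Good k S" by (rule Good_all[OF lsh]) (auto simp: S_def)
  then obtain C where C: "C \<in> carrier_mat k k" and Cw: "\<And>w. w \<in> set S \<Longrightarrow> C * w = w"
    and CX: "\<And>X. X \<in> carrier_mat 1 k \<Longrightarrow> (\<forall>w\<in>set S. X * w = 0\<^sub>m 1 1) \<Longrightarrow> X * C = 0\<^sub>m 1 k"
    unfolding Good_def by blast
  have CA: "C * A = A"
  proof (rule eq_matI)
    fix i j assume "i < dim_row A" "j < dim_col A"
    then have i: "i < k" and j: "j < m" using A by auto
    have "(C * A) $$ (i,j) = (C * mat k 1 (\<lambda>(i,_). A $$ (i,j))) $$ (i,0)"
      using col_entry[OF C A j i] by simp
    also have "C * mat k 1 (\<lambda>(i,_). A $$ (i,j)) = mat k 1 (\<lambda>(i,_). A $$ (i,j))"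
      using Cw j unfolding S_def by auto
    finally show "(C * A) $$ (i,j) = A $$ (i,j)" using i by simp
  qed (use A C in auto)
  have XA: "X * A = 0\<^sub>m 1 m \<longleftrightarrow> (\<forall>w\<in>set S. X * w = 0\<^sub>m 1 1)" if X: "X \<in> carrier_mat 1 k" for X
  proof
    assume "X * A = 0\<^sub>m 1 m"
    then show "\<forall>w\<in>set S. X * w = 0\<^sub>m 1 1"
      unfolding S_def using col_entry[OF X A] X A by (auto intro!: eq_matI)
  next
    assume h: "\<forall>w\<in>set S. X * w = 0\<^sub>m 1 1"
    show "X * A = 0\<^sub>m 1 m"
    proof (rule eq_matI)
      fix i j assume "i < dim_row (0\<^sub>m 1 m :: 'a mat)" "j < dim_col (0\<^sub>m 1 m :: 'a mat)"
      then have i: "i = 0" and j: "j < m" by auto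
      have "X * mat k 1 (\<lambda>(i,_). A $$ (i,j)) = 0\<^sub>m 1 1" using h j unfolding S_def by auto
      then have "(X * mat k 1 (\<lambda>(i,_). A $$ (i,j))) $$ (0,0) = 0" by simp
      then show "(X * A) $$ (i,j) = 0\<^sub>m 1 m $$ (i,j)" using col_entry[OF X A j] i j by simp
    qed (use X A in auto)
  qed
  define B where "B = 1\<^sub>m k - C"
  have Bc: "B \<in> carrier_mat k k" unfolding B_def using C by (auto intro: minus_carrier_mat)
  have BA: "B * A = 0\<^sub>m k m"
  proof -
    have "B * A = 1\<^sub>m k * A - C * A" unfolding B_def using C A
      by (subst minus_mult_distrib_mat[of _ k k]) auto
    also have "\<dots> = 0\<^sub>m k m" using CA A by simp
    finally show ?thesis .
  qed
  have XB: "X * B = X - X * C" if X: "X \<in> carrier_mat 1 k" for X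
    unfolding B_def using X C by (subst mult_minus_distrib_mat[of _ 1 k]) auto
  have BC: "B * C = 0\<^sub>m k k"
  proof (rule eq_matI)
    fix i l assume "i < dim_row (0\<^sub>m k k :: 'a mat)" "l < dim_col (0\<^sub>m k k :: 'a mat)"
    then have i: "i < k" and l: "l < k" by auto
    define R where "R = mat 1 k (\<lambda>(_,l). B $$ (i,l))"
    have R: "R \<in> carrier_mat 1 k" unfolding R_def by simp
    have rowR: "row R 0 = row B i" unfolding R_def using Bc i by (auto intro!: eq_vecI)
    have "R * A = 0\<^sub>m 1 m"
    proof (rule eq_matI)
      fix a j assume "a < dim_row (0\<^sub>m 1 m :: 'a mat)" "j < dim_col (0\<^sub>m 1 m :: 'a mat)"
      then have a: "a = 0" and j: "j < m" by auto
      have "(R * A) $$ (a,j) = (B * A) $$ (i,j)" using a j i R Bc A rowR by simp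
      then show "(R * A) $$ (a,j) = 0\<^sub>m 1 m $$ (a,j)" using BA i j a by simp
    qed (use R A in auto)
    then have "R * C = 0\<^sub>m 1 k" using CX[OF R] XA[OF R] by blast
    then have "(R * C) $$ (0,l) = 0" using l by simp
    moreover have "(R * C) $$ (0,l) = (B * C) $$ (i,l)" using l i R Bc C rowR by simp
    ultimately show "(B * C) $$ (i,l) = 0\<^sub>m k k $$ (i,l)" using i l by simp
  qed (use Bc C in auto)
  have "\<forall>X \<in> carrier_mat 1 k. X * A = 0\<^sub>m 1 m \<longleftrightarrow> (\<exists>Y \<in> carrier_mat 1 k. X = Y * B)"
  proof (intro ballI iffI)
    fix X :: "'a mat" assume X: "X \<in> carrier_mat 1 k" and "X * A = 0\<^sub>m 1 m"
    then have "X * C = 0\<^sub>m 1 k" using CX XA by blast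
    then have "X * B = X" using XB[OF X] X by (auto intro!: eq_matI)
    then show "\<exists>Y \<in> carrier_mat 1 k. X = Y * B" using X by metis
  next
    fix X :: "'a mat" assume X: "X \<in> carrier_mat 1 k" and "\<exists>Y \<in> carrier_mat 1 k. X = Y * B"
    then obtain Y where Y: "Y \<in> carrier_mat 1 k" "X = Y * B" by blast
    have "X * A = Y * (B * A)" using Y Bc A by simp
    also have "\<dots> = 0\<^sub>m 1 m" using BA Y by simp
    finally show "X * A = 0\<^sub>m 1 m" .
  qed
  then show ?thesis using k Bc BC C CA by blast
qed



lemma dir2:
  assumes H: "\<forall>k m (A::'a::ring_1 mat). k \<ge> 1 \<and> m \<ge> 1 \<and> A \<in> carrier_mat k m \<longrightarrow>
      (\<exists>t (B::'a mat). t \<ge> 1 \<and> B \<in> carrier_mat t k \<and>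
         (\<forall>X \<in> carrier_mat 1 k. X * A = 0\<^sub>m 1 m \<longleftrightarrow> (\<exists>Y \<in> carrier_mat 1 t. X = Y * B)) \<and>
         (\<exists>C \<in> carrier_mat k k. B * C = 0\<^sub>m t k \<and> C * A = A))"
  shows "left_semi_hereditary TYPE('a)"
  unfolding left_semi_hereditary_def
proof (intro allI impI)
  fix I :: "'a set" assume "left_ideal I \<and> fg_left_ideal I"
  then obtain G where G: "finite G" and I: "I = {(\<Sum>g\<in>G. c g * g) | c. True}"
    unfolding fg_left_ideal_def by blast
  obtain e where e0: "bij_betw e {0..<card G} G" using ex_bij_betw_nat_finite[OF G] by blast
  define k where "k = card G"
  have e: "bij_betw e {..<k} G" using e0 unfolding k_def by (simp add: atLeast0LessThan)
  have "\<exists>c. (\<forall>i<k. (\<Sum>l<k. c i l * e l) = e i) \<and>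
      (\<forall>x l. (\<Sum>i<k. x i * e i) = 0 \<longrightarrow> l < k \<longrightarrow> (\<Sum>i<k. x i * c i l) = 0)"
  proof (cases "k = 0")
    case True then show ?thesis by simp
  next
    case False
    define A where "A = mat k 1 (\<lambda>(i,_). e i)"
    have A: "A \<in> carrier_mat k 1" unfolding A_def by simp
    from H[rule_format, of k 1 A] False A obtain t B C where
      B: "B \<in> carrier_mat t k" and
      XB: "\<forall>X \<in> carrier_mat 1 k. X * A = 0\<^sub>m 1 1 \<longleftrightarrow> (\<exists>Y \<in> carrier_mat 1 t. X = Y * B)" and
      C: "C \<in> carrier_mat k k" "B * C = 0\<^sub>m t k" "C * A = A"
      by auto
    have "(\<forall>i<k. (\<Sum>l<k. C $$ (i,l) * e l) = e i)"
    proof (intro allI impI)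
      fix i assume i: "i < k"
      have "(C * A) $$ (i,0) = A $$ (i,0)" using C by simp
      then show "(\<Sum>l<k. C $$ (i,l) * e l) = e i"
        using i C(1) unfolding A_def by (simp add: scalar_prod_def atLeast0LessThan)
    qed
    moreover have "(\<Sum>i<k. x i * C $$ (i,l)) = 0" if x: "(\<Sum>i<k. x i * e i) = 0" and l: "l < k" for x l
    proof -
      define X where "X = mat 1 k (\<lambda>(_,i). x i)"
      have Xc: "X \<in> carrier_mat 1 k" unfolding X_def by simp
      have "X * A = 0\<^sub>m 1 1"
        using x unfolding X_def A_def by (auto intro!: eq_matI simp: scalar_prod_def atLeast0LessThan)
      then obtain Y where Y: "Y \<in> carrier_mat 1 t" "X = Y * B" using XB Xc by blast
      have "X * C = Y * (B * C)" using Y B C by simp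
      also have "\<dots> = 0\<^sub>m 1 k" using C Y by simp
      finally have "(X * C) $$ (0,l) = 0" using l by simp
      then show ?thesis using l C(1) unfolding X_def by (simp add: scalar_prod_def atLeast0LessThan)
    qed
    ultimately show ?thesis by (intro exI[of _ "\<lambda>i l. C $$ (i,l)"]) blast
  qed
  then obtain c where c1: "\<And>i. i<k \<Longrightarrow> (\<Sum>l<k. c i l * e l) = e i"
    and c2: "\<And>x l. (\<Sum>i<k. x i * e i) = 0 \<Longrightarrow> l < k \<Longrightarrow> (\<Sum>i<k. x i * c i l) = 0" by blast
  show "projective_left_ideal I" unfolding I by (rule E2P[OF G e c1 c2])
qed

theorem corollary5p6:
  shows "left_semi_hereditary TYPE('a::ring_1) \<longleftrightarrow>
    (\<forall>k m (A::'a mat). k \<ge> 1 \<and> m \<ge> 1 \<and> A \<in> carrier_mat k m \<longrightarrow>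
      (\<exists>t (B::'a mat). t \<ge> 1 \<and> B \<in> carrier_mat t k \<and>
         (\<forall>X \<in> carrier_mat 1 k. X * A = 0\<^sub>m 1 m \<longleftrightarrow> (\<exists>Y \<in> carrier_mat 1 t. X = Y * B)) \<and>
         (\<exists>C \<in> carrier_mat k k. B * C = 0\<^sub>m t k \<and> C * A = A)))"
proof
  assume "left_semi_hereditary TYPE('a)"
  then show "\<forall>k m (A::'a mat). k \<ge> 1 \<and> m \<ge> 1 \<and> A \<in> carrier_mat k m \<longrightarrow>
      (\<exists>t (B::'a mat). t \<ge> 1 \<and> B \<in> carrier_mat t k \<and>
         (\<forall>X \<in> carrier_mat 1 k. X * A = 0\<^sub>m 1 m \<longleftrightarrow> (\<exists>Y \<in> carrier_mat 1 t. X = Y * B)) \<and>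
         (\<exists>C \<in> carrier_mat k k. B * C = 0\<^sub>m t k \<and> C * A = A))"
    using dir1 by blast
next
  assume "\<forall>k m (A::'a mat). k \<ge> 1 \<and> m \<ge> 1 \<and> A \<in> carrier_mat k m \<longrightarrow>
      (\<exists>t (B::'a mat). t \<ge> 1 \<and> B \<in> carrier_mat t k \<and>
         (\<forall>X \<in> carrier_mat 1 k. X * A = 0\<^sub>m 1 m \<longleftrightarrow> (\<exists>Y \<in> carrier_mat 1 t. X = Y * B)) \<and>
         (\<exists>C \<in> carrier_mat k k. B * C = 0\<^sub>m t k \<and> C * A = A))"
  then show "left_semi_hereditary TYPE('a)" by (rule dir2)
qed


end
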